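(* Let $S\subset\mathbb{R}^n_+$ be compact and convex with $0\in S$. Let $a\in\mathbb{C}^n\setminus\mathbb{C}^{*n}$, $a\neq0$, let $J=\{j_1<\dots<j_\ell\}\subset\{1,\dots,n\}$ be the set of indices $j$ with $a_j\neq0$, and let $S_J\subseteq\mathbb{R}^\ell$ be the set of all $t\in\mathbb{R}^\ell$ such that the point $s\in\mathbb{R}^n_+$ defined by $s_{j_k}=t_k$ ($k=1,\dots,\ell$) and $s_j=0$ for $j\notin J$ belongs to $S$. Then $$H_S(a)=H_{S_J}(a_{j_1},\dots,a_{j_\ell}).$$
   Context: $\mathbb{R}_+=[0,\infty)$, $\mathbb{C}^{*n}=(\mathbb{C}\setminus\{0\})^n$. For a compact set $T\subset\mathbb{R}^k_+$ with $0\in T$, $\varphi_T(\xi)=\max_{t\in T}\langle t,\xi\rangle$ and the logarithmic supporting function $H_T\colon\mathbb{C}^k\to\mathbb{R}_+$ is $H_T(z)=\varphi_T(\log|z_1|,\dots,\log|z_k|)$ for $z\in\mathbb{C}^{*k}$ and $H_T(z)=\limsup_{\mathbb{C}^{*k}\ni w\to z}H_T(w)$ for $z\in\mathbb{C}^k\setminus\mathbb{C}^{*k}$. *)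

theory Defs
  imports "HOL-Analysis.Analysis"
begin

text \<open>Convention: a point of R^k (resp. C^k) is a function nat => real (resp. complex)
  vanishing at indices >= k; coordinates are indexed 0..k-1. Topology on such
  functions is the product topology (HOL-Analysis Function_Topology), which on the
  subspace of functions supported in {0..<k} coincides with the Euclidean topology.\<close>

definition Rk :: "nat \<Rightarrow> (nat \<Rightarrow> real) set" where
  "Rk k = {t. \<forall>i\<ge>k. t i = 0}"

definition Rk_plus :: "nat \<Rightarrow> (nat \<Rightarrow> real) set" where
  "Rk_plus k = {t. (\<forall>i<k. 0 \<le> t i) \<and> (\<forall>i\<ge>k. t i = 0)}"

definition Ck :: "nat \<Rightarrow> (nat \<Rightarrow> complex) set" where
  "Ck k = {z. \<forall>i\<ge>k. z i = 0}"

definition Cstar :: "nat \<Rightarrow> (nat \<Rightarrow> complex) set" where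
  "Cstar k = {z. (\<forall>i<k. z i \<noteq> 0) \<and> (\<forall>i\<ge>k. z i = 0)}"

text \<open>Convexity of a set of points, written out (nat => real carries no vector space
  instance in the library).\<close>
definition convex_pts :: "(nat \<Rightarrow> real) set \<Rightarrow> bool" where
  "convex_pts S \<longleftrightarrow> (\<forall>x\<in>S. \<forall>y\<in>S. \<forall>u::real. 0 \<le> u \<and> u \<le> 1 \<longrightarrow>
      (\<lambda>i. u * x i + (1 - u) * y i) \<in> S)"

definition phi :: "nat \<Rightarrow> (nat \<Rightarrow> real) set \<Rightarrow> (nat \<Rightarrow> real) \<Rightarrow> real" where
  "phi k T \<xi> = Sup ((\<lambda>t. \<Sum>i<k. t i * \<xi> i) ` T)"

text \<open>Logarithmic supporting function H_T on C^k (extended-real valued; it is in fact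
  finite and nonnegative for compact T containing 0).\<close>
definition H :: "nat \<Rightarrow> (nat \<Rightarrow> real) set \<Rightarrow> (nat \<Rightarrow> complex) \<Rightarrow> ereal" where
  "H k T z = (if z \<in> Cstar k then ereal (phi k T (\<lambda>i. if i < k then ln (cmod (z i)) else 0))
     else Limsup (at z within Cstar k)
            (\<lambda>w. ereal (phi k T (\<lambda>i. if i < k then ln (cmod (w i)) else 0))))"

definition jseq :: "nat set \<Rightarrow> nat \<Rightarrow> nat" where
  "jseq J k = sorted_list_of_set J ! k"

definition slice :: "(nat \<Rightarrow> real) set \<Rightarrow> nat set \<Rightarrow> (nat \<Rightarrow> real) set" where
  "slice S J = {t \<in> Rk (card J). \<exists>s\<in>S. (\<forall>k<card J. s (jseq J k) = t k) \<and> (\<forall>j. j \<notin> J \<longrightarrow> s j = 0)}"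

end

theory Submission
  imports Defs
begin

lemma cont_lin: "continuous_on A (\<lambda>s::nat\<Rightarrow>real. \<Sum>i<k. s i * x i)"
  by (intro continuous_intros continuous_on_subset[OF continuous_on_product_coordinates]) auto

lemma bdd_lin:
  assumes "compact (S::(nat\<Rightarrow>real) set)"
  shows "bdd_above ((\<lambda>s. \<Sum>i<k. s i * x i) ` S)"
  by (intro bounded_imp_bdd_above compact_imp_bounded compact_continuous_image cont_lin assms)

lemma coord_tendsto: "((\<lambda>w::nat\<Rightarrow>complex. w i) \<longlongrightarrow> a i) (at a within T)"
proof -
  have "((\<lambda>w::nat\<Rightarrow>complex. w i) \<longlongrightarrow> a i) (at a within UNIV)"
    using continuous_on_product_coordinates[of i] unfolding continuous_on_def by blast
  thus ?thesis by (rule tendsto_within_subset) simp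
qed

lemma jseq_bij: "finite J \<Longrightarrow> bij_betw (jseq J) {..<card J} J"
  unfolding jseq_def by (rule bij_betw_nth) auto

lemma reindex:
  assumes "finite J" "J \<subseteq> {..<n}" "\<forall>k<card J. s (jseq J k) = t k" "\<forall>j. j \<notin> J \<longrightarrow> s j = 0"
  shows "(\<Sum>k<card J. t k * x (jseq J k)) = (\<Sum>i<n. s i * (x i::real))"
proof -
  have "(\<Sum>k<card J. t k * x (jseq J k)) = (\<Sum>k<card J. s (jseq J k) * x (jseq J k))"
    using assms(3) by simp
  also have "\<dots> = (\<Sum>i\<in>J. s i * x i)"
    using sum.reindex_bij_betw[OF jseq_bij[OF assms(1)], of "\<lambda>i. s i * x i"] by simp
  also have "\<dots> = (\<Sum>i<n. s i * x i)"
    using assms(2,4) by (intro sum.mono_neutral_left) auto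
  finally show ?thesis .
qed

theorem proposition3p3:
  fixes n :: nat and S :: "(nat \<Rightarrow> real) set" and a :: "nat \<Rightarrow> complex"
  assumes "S \<subseteq> Rk_plus n" and "compact S" and "convex_pts S" and "(\<lambda>_. 0) \<in> S"
    and "a \<in> Ck n" and "a \<notin> Cstar n" and "a \<noteq> (\<lambda>_. 0)"
  shows "H n S a = H (card {j. j < n \<and> a j \<noteq> 0}) (slice S {j. j < n \<and> a j \<noteq> 0})
           (\<lambda>k. if k < card {j. j < n \<and> a j \<noteq> 0} then a (jseq {j. j < n \<and> a j \<noteq> 0} k) else 0)"
proof -
  define J where "J = {j. j < n \<and> a j \<noteq> 0}"
  define l where "l = card J"
  define a' where "a' = (\<lambda>k. if k < l then a (jseq J k) else 0)"
  define \<xi>' where "\<xi>' = (\<lambda>k. if k < l then ln (cmod (a' k)) else 0)"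
  define c where "c = phi l (slice S J) \<xi>'"
  define V where "V = (\<lambda>t. \<Sum>k<l. t k * \<xi>' k) ` slice S J"
  define xi where "xi = (\<lambda>w::nat\<Rightarrow>complex. \<lambda>i. if i < n then ln (cmod (w i)) else 0)"
  define f where "f = (\<lambda>w. ereal (phi n S (xi w)))"
  define F where "F = at a within Cstar n"
  define g where "g = (\<lambda>s::nat\<Rightarrow>real. \<Sum>i<n. s i * ln (cmod (a i)))"
  have finJ: "finite J" and Jsub: "J \<subseteq> {..<n}" unfolding J_def by auto
  have a0: "\<forall>i\<ge>n. a i = 0" using assms(5) unfolding Ck_def by auto
  obtain i0 where i0: "i0 < n" "a i0 = 0" using assms(5,6) unfolding Ck_def Cstar_def by auto
  have Splus: "\<And>s i. s \<in> S \<Longrightarrow> 0 \<le> s i"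
    using assms(1) unfolding Rk_plus_def by (metis (mono_tags, lifting) mem_Collect_eq not_le order_refl subsetD)
  have Szero: "\<And>s i. s \<in> S \<Longrightarrow> i \<ge> n \<Longrightarrow> s i = 0"
    using assms(1) unfolding Rk_plus_def by auto
  have jin: "\<And>k. k < l \<Longrightarrow> jseq J k \<in> J"
    using jseq_bij[OF finJ] unfolding l_def bij_betw_def by auto
  have a'C: "a' \<in> Cstar l"
    unfolding Cstar_def a'_def using jin unfolding J_def by auto
  have RHS: "H l (slice S J) a' = ereal c"
    unfolding H_def c_def \<xi>'_def using a'C by simp
  have LHS: "H n S a = Limsup F f"
    unfolding H_def F_def f_def xi_def using assms(6) by simp
  have xi'eq: "\<And>k. k < l \<Longrightarrow> \<xi>' k = ln (cmod (a (jseq J k)))"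
    unfolding \<xi>'_def a'_def by simp
  have slice_val: "\<exists>s\<in>S. (\<Sum>k<l. t k * \<xi>' k) = g s \<and> (\<forall>j. j \<notin> J \<longrightarrow> s j = 0)"
    if tS: "t \<in> slice S J" for t
  proof -
    obtain s where s: "s \<in> S" "\<forall>k<l. s (jseq J k) = t k" "\<forall>j. j \<notin> J \<longrightarrow> s j = 0"
      using tS unfolding slice_def l_def by auto
    have "(\<Sum>k<l. t k * \<xi>' k) = (\<Sum>k<l. t k * ln (cmod (a (jseq J k))))"
      using xi'eq by simp
    also have "\<dots> = g s"
      unfolding g_def using reindex[OF finJ Jsub, where s=s and t=t and x="\<lambda>i. ln (cmod (a i))"] s
      unfolding l_def by simp
    finally show ?thesis using s by auto
  qed
  obtain M where M: "\<And>s. s \<in> S \<Longrightarrow> g s \<le> M"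
    using bdd_lin[OF assms(2), where k=n and x="\<lambda>i. ln (cmod (a i))"] unfolding g_def bdd_above_def by auto
  have bddV: "bdd_above V"
    unfolding bdd_above_def
  proof (intro exI ballI)
    fix v assume "v \<in> V"
    then obtain t where t: "t \<in> slice S J" "v = (\<Sum>k<l. t k * \<xi>' k)" unfolding V_def by blast
    obtain s where "s \<in> S" "v = g s" using slice_val[OF t(1)] t(2) by blast
    then show "v \<le> M" using M by simp
  qed
  have zslice: "(\<lambda>_. 0) \<in> slice S J"
    unfolding slice_def Rk_def using assms(4) by auto
  have Vne: "V \<noteq> {}" unfolding V_def using zslice by blast
  have cV: "c = Sup V" unfolding c_def V_def phi_def by (rule refl)
  have F1: "g s \<le> c" if s: "s \<in> S" "\<forall>j. j < n \<and> a j = 0 \<longrightarrow> s j = 0" for s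
  proof -
    define t where "t = (\<lambda>k. if k < l then s (jseq J k) else 0)"
    have sJ: "\<forall>j. j \<notin> J \<longrightarrow> s j = 0"
    proof (intro allI impI)
      fix j assume jJ: "j \<notin> J"
      show "s j = 0"
      proof (cases "j < n")
        case True
        then have "a j = 0" using jJ unfolding J_def by auto
        then show ?thesis using s True by auto
      next
        case False
        then show ?thesis using Szero s(1) by auto
      qed
    qed
    have t1: "\<forall>i\<ge>l. t i = 0" by (simp add: t_def)
    have t2: "\<forall>k<l. s (jseq J k) = t k" by (simp add: t_def)
    have ts: "t \<in> slice S J"
      unfolding slice_def Rk_def l_def[symmetric] using s(1) sJ t1 t2 by blast
    have "(\<Sum>k<l. t k * \<xi>' k) = (\<Sum>k<l. t k * ln (cmod (a (jseq J k))))"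
      using xi'eq by simp
    also have "\<dots> = g s"
      unfolding g_def using reindex[OF finJ Jsub, where s=s and t=t and x="\<lambda>i. ln (cmod (a i))"] sJ t2
      unfolding l_def by simp
    finally have "g s \<in> V" unfolding V_def using ts by (metis (no_types, lifting) image_eqI)
    thus ?thesis unfolding cV using bddV by (rule cSup_upper)
  qed
  have Fnb: "F \<noteq> bot"
  proof -
    define \<phi> where "\<phi> = (\<lambda>r::real. \<lambda>i. if i < n \<and> a i = 0 then complex_of_real r else a i)"
    have cphi: "continuous_on UNIV \<phi>"
      unfolding \<phi>_def
    proof (rule continuous_on_coordinatewise_then_product)
      fix i
      show "continuous_on UNIV (\<lambda>x. if i < n \<and> a i = 0 then complex_of_real x else a i)"
        by (cases "i < n \<and> a i = 0") (auto intro!: continuous_intros)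
    qed
    have "(\<lambda>m. \<phi> (inverse (real (Suc m)))) \<longlonglongrightarrow> \<phi> 0"
      by (intro isCont_tendsto_compose[OF _ LIMSEQ_inverse_real_of_nat])
        (use cphi continuous_on_eq_continuous_at in auto)
    moreover have "\<phi> 0 = a" unfolding \<phi>_def by auto
    moreover have "\<phi> (inverse (real (Suc m))) \<in> Cstar n - {a}" for m
    proof -
      have nz: "(1::complex) + of_nat m \<noteq> 0"
        by (metis of_nat_Suc nat.distinct(1) of_nat_eq_0_iff)
      have "\<phi> (inverse (real (Suc m))) i0 \<noteq> a i0" unfolding \<phi>_def using i0 nz by auto
      moreover have "\<phi> (inverse (real (Suc m))) \<in> Cstar n"
        unfolding Cstar_def \<phi>_def using a0 nz by auto
      ultimately show ?thesis by auto
    qed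
    ultimately have "a islimpt Cstar n" unfolding islimpt_sequential by (metis (no_types, lifting))
    thus ?thesis unfolding F_def using trivial_limit_within by blast
  qed
  have evC: "eventually (\<lambda>w. w \<in> Cstar n) F"
    unfolding F_def eventually_at_filter by simp
  have lower: "ereal c \<le> Limsup F f"
  proof -
    have each: "ereal (g s) \<le> Limsup F f" if s: "s \<in> S" "\<forall>j. j \<notin> J \<longrightarrow> s j = 0" for s
    proof -
      define G where "G = (\<lambda>w::nat\<Rightarrow>complex. \<Sum>i<n. s i * ln (cmod (w i)))"
      have "(G \<longlongrightarrow> g s) F"
        unfolding G_def g_def
      proof (intro tendsto_sum)
        fix i assume "i \<in> {..<n}"
        show "((\<lambda>w. s i * ln (cmod (w i))) \<longlongrightarrow> s i * ln (cmod (a i))) F"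
        proof (cases "a i = 0")
          case True
          then have "s i = 0" using s \<open>i \<in> {..<n}\<close> unfolding J_def by auto
          then show ?thesis by simp
        next
          case False
          show ?thesis unfolding F_def
            by (intro tendsto_intros coord_tendsto) (use False in auto)
        qed
      qed
      then have "Limsup F (\<lambda>w. ereal (G w)) = ereal (g s)"
        using Fnb by (intro lim_imp_Limsup tendsto_ereal) auto
      moreover have "Limsup F (\<lambda>w. ereal (G w)) \<le> Limsup F f"
      proof (rule Limsup_mono, rule always_eventually, rule allI)
        fix w
        have "G w = (\<Sum>i<n. s i * xi w i)" unfolding G_def xi_def by simp
        also have "\<dots> \<le> phi n S (xi w)"
          unfolding phi_def by (rule cSup_upper) (use s bdd_lin[OF assms(2)] in auto)
        finally show "ereal (G w) \<le> f w" unfolding f_def by simp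
      qed
      ultimately show ?thesis by simp
    qed
    have allV: "ereal v \<le> Limsup F f" if vV: "v \<in> V" for v
    proof -
      obtain t where t: "t \<in> slice S J" "v = (\<Sum>k<l. t k * \<xi>' k)" using vV unfolding V_def by blast
      obtain s where "s \<in> S" "v = g s" "\<forall>j. j \<notin> J \<longrightarrow> s j = 0" using slice_val[OF t(1)] t(2) by blast
      then show ?thesis using each by simp
    qed
    obtain v0 where v0: "v0 \<in> V" using Vne by auto
    show ?thesis
    proof (cases "Limsup F f")
      case (real r)
      have "Sup V \<le> r" using Vne allV real by (intro cSup_least) auto
      then show ?thesis unfolding cV using real by simp
    next
      case PInf then show ?thesis by simp
    next
      case MInf then show ?thesis using allV[OF v0] by simp
    qed
  qed
  have upper: "Limsup F f \<le> ereal c"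
  proof (rule ereal_le_epsilon2)
    fix \<epsilon> :: real assume "0 < \<epsilon>"
    obtain B where B: "\<And>s. s \<in> S \<Longrightarrow> (\<Sum>i<n. s i * 1) \<le> B"
      using bdd_lin[OF assms(2), where k=n and x="\<lambda>_. 1"] unfolding bdd_above_def by auto
    define B' where "B' = max B 0"
    define z where "z = (\<lambda>i. if a i = 0 then 1 else (0::real))"
    define h where "h = (\<lambda>s::nat\<Rightarrow>real. \<Sum>i<n. s i * z i)"
    define K where "K = {s\<in>S. c + \<epsilon>/2 \<le> g s}"
    have cg: "continuous_on UNIV g" unfolding g_def by (rule cont_lin)
    have "closed {s. c + \<epsilon>/2 \<le> g s}"
      by (rule closed_Collect_le[OF continuous_on_const cg])
    then have compK: "compact K"
    proof -
      have "K = S \<inter> {s. c + \<epsilon>/2 \<le> g s}" unfolding K_def by auto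
      then show ?thesis using compact_Int_closed[OF assms(2) \<open>closed {s. c + \<epsilon>/2 \<le> g s}\<close>] by simp
    qed
    have hnn: "0 \<le> h s" if "s \<in> S" for s
      unfolding h_def z_def using Splus[OF that] by (intro sum_nonneg) auto
    obtain \<delta> where \<delta>: "\<delta> > 0" "\<And>s. s \<in> K \<Longrightarrow> \<delta> \<le> h s"
    proof (cases "K = {}")
      case True
      then show ?thesis using that[of 1] by auto
    next
      case False
      obtain s0 where s0: "s0 \<in> K" "\<And>y. y \<in> K \<Longrightarrow> h s0 \<le> h y"
        using continuous_attains_inf[OF compK False cont_lin[where A=K and k=n and x=z]] unfolding h_def by blast
      have s0S: "s0 \<in> S" and s0g: "c + \<epsilon>/2 \<le> g s0" using s0(1) unfolding K_def by auto
      have "h s0 > 0"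
      proof (rule ccontr)
        assume "\<not> h s0 > 0"
        then have "h s0 = 0" using hnn[OF s0S] by simp
        then have "\<forall>i\<in>{..<n}. s0 i * z i = 0"
          unfolding h_def using Splus[OF s0S]
          by (subst sum_nonneg_eq_0_iff[symmetric]) (auto simp: z_def)
        then have "\<forall>j. j < n \<and> a j = 0 \<longrightarrow> s0 j = 0" by (auto simp: z_def)
        then have "g s0 \<le> c" using F1[OF s0S] by blast
        then show False using s0g \<open>0 < \<epsilon>\<close> by simp
      qed
      then show ?thesis using that[of "h s0"] s0 by auto
    qed
    define L where "L = max 0 ((M - c) / \<delta>)"
    define \<eta> where "\<eta> = \<epsilon> / (2 * (B' + 1))"
    have B'0: "B' \<ge> 0" unfolding B'_def by simp
    have \<eta>0: "\<eta> > 0" unfolding \<eta>_def using \<open>0 < \<epsilon>\<close> B'0 by simp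
    have \<eta>B: "\<eta> * B' \<le> \<epsilon> / 2"
    proof -
      have "\<eta> * B' = \<epsilon> / 2 * (B' / (B' + 1))" unfolding \<eta>_def by (simp add: field_simps)
      also have "\<dots> \<le> \<epsilon> / 2 * 1"
        using B'0 \<open>0 < \<epsilon>\<close> by (intro mult_left_mono) auto
      finally show ?thesis by simp
    qed
    have L0: "L \<ge> 0" unfolding L_def by simp
    have L\<delta>: "M - c \<le> L * \<delta>"
    proof -
      have "(M - c) / \<delta> \<le> L" unfolding L_def by simp
      then show ?thesis using \<delta>(1) by (simp add: pos_divide_le_eq)
    qed
    have E1: "eventually (\<lambda>w. \<forall>i\<in>{..<n}. a i \<noteq> 0 \<longrightarrow> ln (cmod (w i)) < ln (cmod (a i)) + \<eta>) F"
    proof (rule eventually_ball_finite, simp, rule ballI)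
      fix i assume "i \<in> {..<n}"
      show "eventually (\<lambda>w. a i \<noteq> 0 \<longrightarrow> ln (cmod (w i)) < ln (cmod (a i)) + \<eta>) F"
      proof (cases "a i = 0")
        case True then show ?thesis by simp
      next
        case False
        have "((\<lambda>w. ln (cmod (w i))) \<longlongrightarrow> ln (cmod (a i))) F"
          unfolding F_def by (intro tendsto_intros coord_tendsto) (use False in auto)
        from order_tendstoD(2)[OF this, of "ln (cmod (a i)) + \<eta>"] \<eta>0
        show ?thesis by (auto elim: eventually_mono)
      qed
    qed
    have E2: "eventually (\<lambda>w. \<forall>i\<in>{..<n}. a i = 0 \<longrightarrow> cmod (w i) < exp (- L)) F"
    proof (rule eventually_ball_finite, simp, rule ballI)
      fix i assume "i \<in> {..<n}"
      show "eventually (\<lambda>w. a i = 0 \<longrightarrow> cmod (w i) < exp (- L)) F"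
      proof (cases "a i = 0")
        case False then show ?thesis by simp
      next
        case True
        have "((\<lambda>w. cmod (w i)) \<longlongrightarrow> cmod (a i)) F"
          unfolding F_def by (intro tendsto_intros coord_tendsto)
        from order_tendstoD(2)[OF this, of "exp (- L)"] True
        show ?thesis by (auto elim: eventually_mono)
      qed
    qed
    have "eventually (\<lambda>w. f w \<le> ereal (c + \<epsilon>)) F"
      using eventually_conj[OF evC eventually_conj[OF E1 E2]]
    proof (rule eventually_mono)
      fix w assume w: "w \<in> Cstar n \<and> (\<forall>i\<in>{..<n}. a i \<noteq> 0 \<longrightarrow> ln (cmod (w i)) < ln (cmod (a i)) + \<eta>)
          \<and> (\<forall>i\<in>{..<n}. a i = 0 \<longrightarrow> cmod (w i) < exp (- L))"
      have bound: "(\<Sum>i<n. s i * xi w i) \<le> c + \<epsilon>" if sS: "s \<in> S" for s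
      proof -
        have tm: "s i * xi w i \<le> s i * ln (cmod (a i)) + \<eta> * s i - L * (s i * z i)"
          if i: "i \<in> {..<n}" for i
        proof (cases "a i = 0")
          case False
          have "s i * ln (cmod (w i)) \<le> s i * (ln (cmod (a i)) + \<eta>)"
            using w i False Splus[OF sS, of i] by (intro mult_left_mono) auto
          then show ?thesis using i False unfolding xi_def z_def by (simp add: algebra_simps)
        next
          case True
          have "w i \<noteq> 0" using w i unfolding Cstar_def by auto
          then have "0 < cmod (w i)" by simp
          moreover have "cmod (w i) < exp (- L)" using w i True by auto
          ultimately have "ln (cmod (w i)) < - L"
            by (metis ln_exp ln_less_cancel_iff exp_gt_zero)
          then have "s i * ln (cmod (w i)) \<le> s i * (- L)"
            using Splus[OF sS, of i] by (intro mult_left_mono) auto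
          moreover have "0 \<le> \<eta> * s i" using \<eta>0 Splus[OF sS, of i] by simp
          ultimately show ?thesis using i True unfolding xi_def z_def by (simp add: algebra_simps)
        qed
        have "(\<Sum>i<n. s i * xi w i) \<le> (\<Sum>i<n. s i * ln (cmod (a i)) + \<eta> * s i - L * (s i * z i))"
          by (rule sum_mono) (rule tm)
        also have "\<dots> = g s + \<eta> * (\<Sum>i<n. s i) - L * h s"
          unfolding g_def h_def by (simp add: sum.distrib sum_subtractf sum_distrib_left)
        also have "\<dots> \<le> g s + \<epsilon> / 2 - L * h s"
        proof -
          have "(\<Sum>i<n. s i) \<le> B'" using B[OF sS] unfolding B'_def by simp
          then have "\<eta> * (\<Sum>i<n. s i) \<le> \<eta> * B'" using \<eta>0 by (intro mult_left_mono) auto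
          then show ?thesis using \<eta>B by simp
        qed
        also have "\<dots> \<le> c + \<epsilon>"
        proof (cases "s \<in> K")
          case True
          then have "\<delta> \<le> h s" using \<delta>(2) by blast
          then have "L * \<delta> \<le> L * h s" using L0 by (intro mult_left_mono) auto
          then show ?thesis using L\<delta> M[OF sS] \<open>0 < \<epsilon>\<close> by simp
        next
          case False
          then have "g s < c + \<epsilon>/2" using sS unfolding K_def by auto
          moreover have "0 \<le> L * h s" using L0 hnn[OF sS] by simp
          ultimately show ?thesis by simp
        qed
        finally show ?thesis .
      qed
      have "phi n S (xi w) \<le> c + \<epsilon>"
        unfolding phi_def using assms(4) bound by (intro cSup_least) auto
      then show "f w \<le> ereal (c + \<epsilon>)" unfolding f_def by simp
    qed
    then have "Limsup F f \<le> ereal (c + \<epsilon>)" by (rule Limsup_bounded)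
    then show "Limsup F f \<le> ereal c + ereal \<epsilon>" by simp
  qed
  have "H n S a = H l (slice S J) a'"
    using LHS RHS lower upper by simp
  then show ?thesis unfolding J_def l_def a'_def .
qed

end
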